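(* Let $\mathcal{G}$ be a dynamic multigraph with finite vertex set $\mathcal{V}$ and finite edge set $\mathcal{E}$, and let $\mathcal{L}_{\mathcal{G}}$ be its increment-weighted line graph and $\mathcal{L}^*_{\mathcal{G}}=\bigcup_{i\in\mathcal{V}}\mathcal{M}_{\mathcal{G}}(i)$ its line graph skeleton, both as defined in the context. Then the weighted connectivities of $\mathcal{L}_{\mathcal{G}}$ and $\mathcal{L}^*_{\mathcal{G}}$ are equivalent: for every threshold $\omega\in\mathbb{R}$, $\mathrm{comps}(\mathcal{L}^*_{\mathcal{G}},\omega)=\mathrm{comps}(\mathcal{L}_{\mathcal{G}},\omega)$.
   Context: A dynamic multigraph $\mathcal{G}(\mathcal{V},\mathcal{E},\mathcal{T})$ consists of a finite vertex set $\mathcal{V}$ and a finite set $\mathcal{E}$ of directed timestamped edges $e_r=(i_r,j_r,t_r)$ with $i_r,j_r\in\mathcal{V}$, $i_r\neq j_r$ (no self loops), $t_r\in\mathcal{T}=[0,T]$; several edges may join the same ordered pair at different times, timestamps may tie across edges, and no two edges agree in both ordered vertex pair and timestamp. For $i\in\mathcal{V}$, $\mathcal{E}^{(in)}_i=\{e_r\in\mathcal{E}: j_r=i\}$, $\mathcal{E}^{(out)}_i=\{e_r\in\mathcal{E}: i_r=i\}$, $\mathcal{E}_i=\mathcal{E}^{(in)}_i\cup\mathcal{E}^{(out)}_i$. Increment-weighted line graph $\mathcal{L}_{\mathcal{G}}$: its vertex set is $\mathcal{E}$; for $e_r,e_s\in\mathcal{E}$ there is a directed edge $(e_r,e_s)$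 with weight $w_{rs}=t_s-t_r$ if and only if $j_r=i_s$ (tip-to-tail) and $t_r\le t_s$. Line graph skeleton: for each $i\in\mathcal{V}$, the set $\mathcal{M}_{\mathcal{G}}(i)$ is produced as follows. Sort $\mathcal{E}_i$ by timestamp, with incoming edges placed before outgoing edges when timestamps are equal. Start with an empty list $W$ and an empty output. Process the edges of $\mathcal{E}_i$ in sorted order: if the current edge $e_j$ is incoming to $i$, append it to $W$; if it is outgoing from $i$, then for every $e_k\in W$ add the pair $(e_k,e_j)$ to the output, and then replace $W$ by the one-element list consisting of the last element of $W$ (leaving $W$ empty if it was empty). Each output pair $(e_k,e_j)$ is an edge with weight $t_j-t_k$. $\mathcal{L}^*_{\mathcal{G}}$ is the weighted graph on vertex set $\mathcal{E}$ whose edge set is the union over all $i\in\mathcal{V}$ of these outputs. Weight-filtered connected components: for a weighted graph $\mathcal{H}$ and threshold $\omega$, $\mathrm{comps}(\mathcal{H},\omega)$ is the set of connected components (ignoring edge directions) of the graph on the same vertex set that keeps only the edges of weight $\le\omega$. Two weighted graphs on the same vertex set have equivalent weighted connectivities if their weight-filtered connected components coincide for every $\omega$. *)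

theory Defs
  imports Main "HOL.Real"
begin

type_synonym 'v tedge = "'v \<times> 'v \<times> real"

definition src :: "'v tedge \<Rightarrow> 'v" where "src e = fst e"
definition dst :: "'v tedge \<Rightarrow> 'v" where "dst e = fst (snd e)"
definition tstamp :: "'v tedge \<Rightarrow> real" where "tstamp e = snd (snd e)"

text \<open>Dynamic multigraph with vertex set V, edge set E, time window [0,T].
  Representing E as a set of triples makes (pair, timestamp) unique automatically.\<close>
definition dyn_multigraph :: "'v set \<Rightarrow> 'v tedge set \<Rightarrow> real \<Rightarrow> bool" where
  "dyn_multigraph V E T \<longleftrightarrow> finite V \<and> finite E \<and>
     (\<forall>e\<in>E. src e \<in> V \<and> dst e \<in> V \<and> src e \<noteq> dst e \<and> tstamp e \<in> {0..T})"

definition line_graph :: "'v tedge set \<Rightarrow> ('v tedge \<times> 'v tedge \<times> real) set" where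
  "line_graph E = {(r, s, tstamp s - tstamp r) | r s.
      r \<in> E \<and> s \<in> E \<and> dst r = src s \<and> tstamp r \<le> tstamp s}"

definition incident :: "'v tedge set \<Rightarrow> 'v \<Rightarrow> 'v tedge set" where
  "incident E i = {e \<in> E. dst e = i \<or> src e = i}"

text \<open>xs is a valid sorting of E_i: by timestamp, incoming before outgoing on ties
  (ties within the same kind broken arbitrarily).\<close>
definition valid_sort :: "'v tedge set \<Rightarrow> 'v \<Rightarrow> 'v tedge list \<Rightarrow> bool" where
  "valid_sort E i xs \<longleftrightarrow> distinct xs \<and> set xs = incident E i \<and>
     sorted_wrt (\<lambda>a b. tstamp a < tstamp b \<or>
                        (tstamp a = tstamp b \<and> (dst a = i \<or> dst b \<noteq> i))) xs"

fun skel_proc :: "'v \<Rightarrow> 'v tedge list \<Rightarrow> 'v tedge list \<Rightarrow> ('v tedge \<times> 'v tedge \<times> real) set" where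
  "skel_proc i W [] = {}"
| "skel_proc i W (e # es) =
     (if dst e = i then skel_proc i (W @ [e]) es
      else {(k, e, tstamp e - tstamp k) | k. k \<in> set W} \<union>
           skel_proc i (if W = [] then [] else [last W]) es)"

definition skeleton_at :: "'v \<Rightarrow> 'v tedge list \<Rightarrow> ('v tedge \<times> 'v tedge \<times> real) set" where
  "skeleton_at i xs = skel_proc i [] xs"

definition skeleton :: "'v set \<Rightarrow> ('v \<Rightarrow> 'v tedge list) \<Rightarrow> ('v tedge \<times> 'v tedge \<times> real) set" where
  "skeleton V ord = (\<Union>i\<in>V. skeleton_at i (ord i))"

definition comps :: "'a set \<Rightarrow> ('a \<times> 'a \<times> real) set \<Rightarrow> real \<Rightarrow> 'a set set" where
  "comps Vs H \<omega> =
     (let R = {(x, y). \<exists>w. (x, y, w) \<in> H \<and> w \<le> \<omega> \<and> x \<in> Vs \<and> y \<in> Vs}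
      in Vs // ((R \<union> R\<inverse>)\<^sup>*))"

end

theory Submission
  imports Defs
begin

lemma skel_sound:
  "(k,e,w) \<in> skel_proc i W xs \<Longrightarrow> sorted_wrt (\<lambda>a b. tstamp a \<le> tstamp b) xs \<Longrightarrow>
   \<forall>x\<in>set W. \<forall>y\<in>set xs. tstamp x \<le> tstamp y \<Longrightarrow>
   (k \<in> set W \<or> (k \<in> set xs \<and> dst k = i)) \<and> e \<in> set xs \<and> dst e \<noteq> i
     \<and> tstamp k \<le> tstamp e \<and> w = tstamp e - tstamp k"
proof (induction xs arbitrary: W)
  case Nil
  then show ?case by simp
next
  case (Cons x xs)
  show ?case
  proof (cases "dst x = i")
    case True
    then have "(k,e,w) \<in> skel_proc i (W @ [x]) xs" using Cons.prems by simp
    from Cons.IH[OF this] Cons.prems True show ?thesis by auto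
  next
    case False
    then have "(k,e,w) \<in> {(k, x, tstamp x - tstamp k) | k. k \<in> set W} \<or>
       (k,e,w) \<in> skel_proc i (if W = [] then [] else [last W]) xs" using Cons.prems by simp
    then show ?thesis
    proof
      assume "(k,e,w) \<in> {(k, x, tstamp x - tstamp k) | k. k \<in> set W}"
      then show ?thesis using Cons.prems False by auto
    next
      assume a: "(k,e,w) \<in> skel_proc i (if W = [] then [] else [last W]) xs"
      have lw: "W \<noteq> [] \<Longrightarrow> last W \<in> set W" by simp
      have "\<forall>x\<in>set (if W = [] then [] else [last W]). \<forall>y\<in>set xs. tstamp x \<le> tstamp y"
        using Cons.prems(3) lw by auto
      from Cons.IH[OF a _ this] Cons.prems lw show ?thesis
        by (cases "W = []") auto
    qed
  qed
qed

definition Rel :: "('a \<times> 'a \<times> real) set \<Rightarrow> real \<Rightarrow> ('a \<times> 'a) set" where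
  "Rel H \<omega> = {(x, y). \<exists>w. (x, y, w) \<in> H \<and> w \<le> \<omega>}"

lemma Rel_mono: "H \<subseteq> H' \<Longrightarrow> Rel H \<omega> \<subseteq> Rel H' \<omega>"
  unfolding Rel_def by auto

lemma skel_prefix:
  "\<exists>W'. skel_proc i W' ys \<subseteq> skel_proc i W (as @ ys) \<and> set W' \<subseteq> set W \<union> set as"
proof (induction as arbitrary: W)
  case Nil
  show ?case by (intro exI[of _ W]) simp
next
  case (Cons a as)
  show ?case
  proof (cases "dst a = i")
    case True
    from Cons.IH[of "W @ [a]"] True show ?thesis by auto
  next
    case False
    from Cons.IH[of "if W = [] then [] else [last W]"] obtain W' where
      "skel_proc i W' ys \<subseteq> skel_proc i (if W = [] then [] else [last W]) (as @ ys)"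
      "set W' \<subseteq> set (if W = [] then [] else [last W]) \<union> set as" by blast
    moreover have "set (if W = [] then [] else [last W]) \<subseteq> set W" by auto
    moreover have "skel_proc i (if W = [] then [] else [last W]) (as @ ys) \<subseteq> skel_proc i W ((a # as) @ ys)"
      using False by auto
    ultimately show ?thesis
      apply (intro exI[of _ W'] conjI)
       apply (erule (1) subset_trans[OF _ ])
      by auto
  qed
qed

lemma skel_complete:
  "sorted_wrt (\<lambda>a b. tstamp a \<le> tstamp b) xs \<Longrightarrow>
   \<forall>x\<in>set W. \<forall>y\<in>set xs. tstamp x \<le> tstamp y \<Longrightarrow>
   l \<in> set W \<Longrightarrow> tstamp l \<le> tstamp (last W) \<Longrightarrow>
   s \<in> set xs \<Longrightarrow> dst s \<noteq> i \<Longrightarrow> tstamp s - tstamp l \<le> \<omega> \<Longrightarrow>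
   (l, s) \<in> (Rel (skel_proc i W xs) \<omega> \<union> (Rel (skel_proc i W xs) \<omega>)\<inverse>)\<^sup>*"
proof (induction xs arbitrary: W l)
  case Nil
  then show ?case by simp
next
  case (Cons x xs)
  show ?case
  proof (cases "dst x = i")
    case True
    then have eq: "skel_proc i W (x # xs) = skel_proc i (W @ [x]) xs" by simp
    have s: "s \<in> set xs" using Cons.prems True by auto
    have "(l, s) \<in> (Rel (skel_proc i (W @ [x]) xs) \<omega> \<union> (Rel (skel_proc i (W @ [x]) xs) \<omega>)\<inverse>)\<^sup>*"
      apply (rule Cons.IH)
      using Cons.prems s by auto
    then show ?thesis using eq by simp
  next
    case False
    have Wne: "W \<noteq> []" using Cons.prems(3) by auto
    define l' where "l' = last W"
    have l'W: "l' \<in> set W" using Wne l'_def by simp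
    define H where "H = skel_proc i W (x # xs)"
    have Heq: "H = {(k, x, tstamp x - tstamp k) | k. k \<in> set W} \<union> skel_proc i [l'] xs"
      using False Wne H_def l'_def by simp
    have txs: "tstamp x \<le> tstamp s" using Cons.prems(1,5) by auto
    have "(l, x, tstamp x - tstamp l) \<in> H" unfolding Heq using Cons.prems(3) by blast
    then have e1: "(l, x) \<in> Rel H \<omega>"
      unfolding Rel_def using Cons.prems(7) txs by auto
    show ?thesis
    proof (cases "s = x")
      case True
      then show ?thesis using e1 H_def by auto
    next
      case sx: False
      then have s: "s \<in> set xs" using Cons.prems(5) by simp
      have "(l', x, tstamp x - tstamp l') \<in> H" unfolding Heq using l'W by blast
      then have e2: "(l', x) \<in> Rel H \<omega>"
        unfolding Rel_def using Cons.prems(4,7) txs l'_def by auto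
      have "(l', s) \<in> (Rel (skel_proc i [l'] xs) \<omega> \<union> (Rel (skel_proc i [l'] xs) \<omega>)\<inverse>)\<^sup>*"
        apply (rule Cons.IH)
        using Cons.prems s l'W l'_def by auto
      moreover have "Rel (skel_proc i [l'] xs) \<omega> \<subseteq> Rel H \<omega>"
        by (rule Rel_mono) (simp add: Heq)
      ultimately have p: "(l', s) \<in> (Rel H \<omega> \<union> (Rel H \<omega>)\<inverse>)\<^sup>*"
        by (metis (no_types, lifting) Un_mono converse_mono rtrancl_mono subsetD)
      have "(l, x) \<in> (Rel H \<omega> \<union> (Rel H \<omega>)\<inverse>)\<^sup>*" using e1 by auto
      moreover have "(x, l') \<in> (Rel H \<omega> \<union> (Rel H \<omega>)\<inverse>)\<^sup>*" using e2 by auto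
      ultimately show ?thesis using p H_def
        by (meson rtrancl_trans)
    qed
  qed
qed

theorem mainTheorem1:
  fixes V :: "'v set" and E :: "'v tedge set" and T :: real
    and ord :: "'v \<Rightarrow> 'v tedge list" and \<omega> :: real
  assumes "dyn_multigraph V E T"
    and "\<forall>i\<in>V. valid_sort E i (ord i)"
  shows "comps E (skeleton V ord) \<omega> = comps E (line_graph E) \<omega>"
proof -
  define Rs where "Rs = {(x, y). \<exists>w. (x, y, w) \<in> skeleton V ord \<and> w \<le> \<omega> \<and> x \<in> E \<and> y \<in> E}"
  define Rl where "Rl = {(x, y). \<exists>w. (x, y, w) \<in> line_graph E \<and> w \<le> \<omega> \<and> x \<in> E \<and> y \<in> E}"
  have srt: "sorted_wrt (\<lambda>a b. tstamp a \<le> tstamp b) (ord i)" if "i \<in> V" for i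
  proof -
    have "sorted_wrt (\<lambda>a b. tstamp a < tstamp b \<or>
                        (tstamp a = tstamp b \<and> (dst a = i \<or> dst b \<noteq> i))) (ord i)"
      using assms(2) that unfolding valid_sort_def by blast
    then show ?thesis by (rule sorted_wrt_mono_rel[rotated]) auto
  qed
  have setord: "set (ord i) = incident E i" if "i \<in> V" for i
    using assms(2) that unfolding valid_sort_def by blast
  have sound: "(k,e,w) \<in> skel_proc i [] (ord i) \<Longrightarrow> i \<in> V \<Longrightarrow>
      k \<in> E \<and> e \<in> E \<and> dst k = i \<and> src e = i \<and> tstamp k \<le> tstamp e \<and> w = tstamp e - tstamp k"
    for k e w i
  proof -
    assume a: "(k,e,w) \<in> skel_proc i [] (ord i)" and iV: "i \<in> V"
    from skel_sound[OF a srt[OF iV]] setord[OF iV] show ?thesis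
      unfolding incident_def by auto
  qed
  have RsRl: "Rs \<subseteq> Rl"
  proof
    fix p assume "p \<in> Rs"
    then obtain x y w where p: "p = (x,y)" "(x,y,w) \<in> skeleton V ord" "w \<le> \<omega>" "x \<in> E" "y \<in> E"
      unfolding Rs_def by blast
    then obtain i where "i \<in> V" "(x,y,w) \<in> skel_proc i [] (ord i)"
      unfolding skeleton_def skeleton_at_def by blast
    from sound[OF this(2,1)] have "(x,y,w) \<in> line_graph E"
      unfolding line_graph_def mem_Collect_eq by (intro exI[of _ x] exI[of _ y] conjI) auto
    then show "p \<in> Rl" using p unfolding Rl_def by blast
  qed
  have RlRs: "Rl \<subseteq> (Rs \<union> Rs\<inverse>)\<^sup>*"
  proof
    fix p assume "p \<in> Rl"
    then obtain r s where p: "p = (r,s)" "r \<in> E" "s \<in> E" "dst r = src s"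
      "tstamp r \<le> tstamp s" "tstamp s - tstamp r \<le> \<omega>"
      unfolding Rl_def line_graph_def by auto
    define i where "i = dst r"
    have iV: "i \<in> V" using assms(1) p(2) unfolding dyn_multigraph_def i_def by blast
    have dsts: "dst s \<noteq> i" using assms(1) p(3,4) unfolding dyn_multigraph_def i_def by auto
    have rin: "r \<in> set (ord i)" using setord[OF iV] p(2) unfolding incident_def i_def by auto
    have sin: "s \<in> set (ord i)" using setord[OF iV] p(3,4) unfolding incident_def i_def by auto
    obtain as bs where xs: "ord i = as @ r # bs" using rin by (meson split_list)
    have "s \<notin> set as"
    proof
      assume "s \<in> set as"
      have "sorted_wrt (\<lambda>a b. tstamp a < tstamp b \<or>
                        (tstamp a = tstamp b \<and> (dst a = i \<or> dst b \<noteq> i))) (ord i)"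
        using assms(2) iV unfolding valid_sort_def by blast
      then have "tstamp s < tstamp r \<or> (tstamp s = tstamp r \<and> (dst s = i \<or> dst r \<noteq> i))"
        using \<open>s \<in> set as\<close> unfolding xs sorted_wrt_append by auto
      then show False using p(5) dsts i_def by auto
    qed
    then have sbs: "s \<in> set bs" using sin dsts xs i_def by auto
    obtain W' where W': "skel_proc i W' (r # bs) \<subseteq> skel_proc i [] (ord i)"
      and W's: "set W' \<subseteq> set as"
      using skel_prefix[of i "r # bs" "[]" as] xs by auto
    have eq: "skel_proc i W' (r # bs) = skel_proc i (W' @ [r]) bs" using i_def by simp
    have sb: "sorted_wrt (\<lambda>a b. tstamp a \<le> tstamp b) (as @ r # bs)"
      using srt[OF iV] xs by simp
    have "(r, s) \<in> (Rel (skel_proc i (W' @ [r]) bs) \<omega> \<union> (Rel (skel_proc i (W' @ [r]) bs) \<omega>)\<inverse>)\<^sup>*"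
    proof (rule skel_complete)
      show "sorted_wrt (\<lambda>a b. tstamp a \<le> tstamp b) bs" using sb by (simp add: sorted_wrt_append)
      show "\<forall>x\<in>set (W' @ [r]). \<forall>y\<in>set bs. tstamp x \<le> tstamp y"
        using sb W's unfolding sorted_wrt_append by auto
    qed (use sbs dsts p(6) in auto)
    moreover have "Rel (skel_proc i (W' @ [r]) bs) \<omega> \<subseteq> Rs"
    proof
      fix q assume "q \<in> Rel (skel_proc i (W' @ [r]) bs) \<omega>"
      then obtain x y w where q: "q = (x,y)" "(x,y,w) \<in> skel_proc i [] (ord i)" "w \<le> \<omega>"
        unfolding Rel_def using W' eq by auto
      from sound[OF q(2) iV] have "x \<in> E" "y \<in> E" by auto
      moreover have "(x,y,w) \<in> skeleton V ord"
        unfolding skeleton_def skeleton_at_def using q(2) iV by blast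
      ultimately show "q \<in> Rs" unfolding Rs_def using q by blast
    qed
    ultimately show "p \<in> (Rs \<union> Rs\<inverse>)\<^sup>*" using p(1)
      by (metis (no_types, lifting) Un_mono converse_mono rtrancl_mono subsetD)
  qed
  have "(Rs \<union> Rs\<inverse>)\<^sup>* = (Rl \<union> Rl\<inverse>)\<^sup>*"
  proof
    show "(Rs \<union> Rs\<inverse>)\<^sup>* \<subseteq> (Rl \<union> Rl\<inverse>)\<^sup>*" using RsRl by (intro rtrancl_mono) auto
    have "Rl\<inverse> \<subseteq> (Rs \<union> Rs\<inverse>)\<^sup>*"
    proof -
      have "Rl\<inverse> \<subseteq> ((Rs \<union> Rs\<inverse>)\<^sup>*)\<inverse>" using RlRs by auto
      also have "\<dots> = ((Rs \<union> Rs\<inverse>)\<inverse>)\<^sup>*" by (rule rtrancl_converse[symmetric])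
      also have "(Rs \<union> Rs\<inverse>)\<inverse> = Rs \<union> Rs\<inverse>" by auto
      finally show ?thesis .
    qed
    then show "(Rl \<union> Rl\<inverse>)\<^sup>* \<subseteq> (Rs \<union> Rs\<inverse>)\<^sup>*" using RlRs
      by (intro rtrancl_subset_rtrancl) auto
  qed
  then show ?thesis unfolding comps_def Let_def Rs_def Rl_def by simp
qed

end
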